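(* Let $\mathcal{M}=(E,\rho)$ be a $q$-matroid with exactly one cyclic flat, $\mathcal{Z}(\mathcal{M})=\{\hat Z\}$ (so $\hat Z=\mathrm{cl}(0)=\mathrm{cyc}(E)$ and $\rho(\hat Z)=0$). Then for every subspace $V\le E$: $V$ is a flat if and only if $\hat Z\le V$, and $V$ is open (cyclic) if and only if $V\le\hat Z$. In particular, $\mathrm{cl}(0)=E$ if and only if $\mathcal{M}=\mathcal{U}_0(E)$, and $\mathrm{cyc}(E)=0$ if and only if $\mathcal{M}=\mathcal{U}_{\dim E}(E)$.
   Context: Let $\mathbb{F}=\mathbb{F}_q$. A $q$-matroid is $\mathcal{M}=(E,\rho)$, $E$ a finite-dimensional $\mathbb{F}$-vector space, $\rho$ from subspaces to $\mathbb{Z}_{\ge0}$ with $0\le\rho(V)\le\dim V$, monotone and submodular. Flat: $\rho(F+\langle x\rangle)>\rho(F)$ for all $x\notin F$. Closure: $\mathrm{cl}(V)=\sum\{\langle x\rangle:\rho(V+\langle x\rangle)=\rho(V)\}$. Cyclic core: $\mathrm{cyc}(V)=\{x\in V\mid\rho(W)=\rho(V)\text{ for all }W\le V\text{ with }W+\langle x\rangle=V\}$; $V$ is cyclic (equivalently open, i.e. a sum of circuits) if $\mathrm{cyc}(V)=V$. $\mathcal{Z}(\mathcal{M})$: set of cyclic flats. $\mathcal{U}_k(E)$ is the $q$-matroid with $\rho(V)=\min\{k,\dim V\}$. *)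

theory Defs
  imports "HOL-Analysis.Analysis"
begin

text \<open>Ambient space: vectors 'a^'n over a finite field 'a (= F_q).
  The q-matroid ground space E is an arbitrary subspace of 'a^'n
  (every finite-dimensional F_q-space, including 0, arises this way).\<close>

type_synonym ('a, 'n) vecsp = "'a ^ 'n"

definition subspaces_of :: "('a::{field,finite} ^ 'n) set \<Rightarrow> ('a ^ 'n) set set" where
  "subspaces_of E = {V. vec.subspace V \<and> V \<subseteq> E}"

definition ssum :: "('a::{field,finite} ^ 'n) set \<Rightarrow> ('a ^ 'n) set \<Rightarrow> ('a ^ 'n) set" where
  "ssum V W = vec.span (V \<union> W)"

definition qmatroid :: "('a::{field,finite} ^ 'n) set \<Rightarrow> (('a ^ 'n) set \<Rightarrow> nat) \<Rightarrow> bool" where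
  "qmatroid E \<rho> \<longleftrightarrow> vec.subspace E \<and>
     (\<forall>V \<in> subspaces_of E. \<rho> V \<le> vec.dim V) \<and>
     (\<forall>V \<in> subspaces_of E. \<forall>W \<in> subspaces_of E. V \<subseteq> W \<longrightarrow> \<rho> V \<le> \<rho> W) \<and>
     (\<forall>V \<in> subspaces_of E. \<forall>W \<in> subspaces_of E.
        \<rho> (ssum V W) + \<rho> (V \<inter> W) \<le> \<rho> V + \<rho> W)"

definition is_flat :: "('a::{field,finite} ^ 'n) set \<Rightarrow> (('a ^ 'n) set \<Rightarrow> nat) \<Rightarrow> ('a ^ 'n) set \<Rightarrow> bool" where
  "is_flat E \<rho> F \<longleftrightarrow> F \<in> subspaces_of E \<and>
     (\<forall>x \<in> E. x \<notin> F \<longrightarrow> \<rho> (ssum F (vec.span {x})) > \<rho> F)"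

definition qcl :: "('a::{field,finite} ^ 'n) set \<Rightarrow> (('a ^ 'n) set \<Rightarrow> nat) \<Rightarrow> ('a ^ 'n) set \<Rightarrow> ('a ^ 'n) set" where
  "qcl E \<rho> V = vec.span (\<Union>{vec.span {x} | x. x \<in> E \<and> \<rho> (ssum V (vec.span {x})) = \<rho> V})"

definition qcyc :: "('a::{field,finite} ^ 'n) set \<Rightarrow> (('a ^ 'n) set \<Rightarrow> nat) \<Rightarrow> ('a ^ 'n) set \<Rightarrow> ('a ^ 'n) set" where
  "qcyc E \<rho> V = {x \<in> V. \<forall>W. vec.subspace W \<and> W \<subseteq> V \<and> ssum W (vec.span {x}) = V \<longrightarrow> \<rho> W = \<rho> V}"

definition is_cyclic :: "('a::{field,finite} ^ 'n) set \<Rightarrow> (('a ^ 'n) set \<Rightarrow> nat) \<Rightarrow> ('a ^ 'n) set \<Rightarrow> bool" where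
  "is_cyclic E \<rho> V \<longleftrightarrow> V \<in> subspaces_of E \<and> qcyc E \<rho> V = V"

definition cyclic_flats :: "('a::{field,finite} ^ 'n) set \<Rightarrow> (('a ^ 'n) set \<Rightarrow> nat) \<Rightarrow> ('a ^ 'n) set set" where
  "cyclic_flats E \<rho> = {V. is_flat E \<rho> V \<and> is_cyclic E \<rho> V}"

definition is_uniform :: "nat \<Rightarrow> ('a::{field,finite} ^ 'n) set \<Rightarrow> (('a ^ 'n) set \<Rightarrow> nat) \<Rightarrow> bool" where
  "is_uniform k E \<rho> \<longleftrightarrow> (\<forall>V \<in> subspaces_of E. \<rho> V = min k (vec.dim V))"

end

theory Submission
  imports Defs
begin

lemma sub_ssum: "ssum V (vec.span {x}) = vec.span (insert x V)" if "vec.subspace V"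
proof
  show "ssum V (vec.span {x}) \<subseteq> vec.span (insert x V)"
    unfolding ssum_def
    by (intro vec.span_minimal) (auto intro: vec.span_base vec.span_mono[THEN subsetD, of "{x}"])
  show "vec.span (insert x V) \<subseteq> ssum V (vec.span {x})"
    unfolding ssum_def by (intro vec.span_mono) (auto intro: vec.span_base)
qed

lemma subsp_ssum: "V \<in> subspaces_of E \<Longrightarrow> W \<in> subspaces_of E \<Longrightarrow> vec.subspace E \<Longrightarrow> ssum V W \<in> subspaces_of E"
  unfolding subspaces_of_def ssum_def using vec.span_minimal[of "V \<union> W" E] by auto

lemma subsp_int: "V \<in> subspaces_of E \<Longrightarrow> W \<in> subspaces_of E \<Longrightarrow> V \<inter> W \<in> subspaces_of E"
  unfolding subspaces_of_def by (auto simp: vec.subspace_inter)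

lemma subsp_span1: "x \<in> E \<Longrightarrow> vec.subspace E \<Longrightarrow> vec.span {x} \<in> subspaces_of E"
  unfolding subspaces_of_def by (auto intro: vec.span_minimal[THEN subsetD])

lemma subsp_zero: "vec.subspace E \<Longrightarrow> {0} \<in> subspaces_of E"
  unfolding subspaces_of_def by (auto simp: vec.subspace_0)

lemma ssum_span: "ssum (vec.span A) (vec.span B) = vec.span (A \<union> B)"
  unfolding ssum_def
proof
  show "vec.span (vec.span A \<union> vec.span B) \<subseteq> vec.span (A \<union> B)"
    by (intro vec.span_minimal) (auto intro: vec.span_mono[THEN subsetD])
  show "vec.span (A \<union> B) \<subseteq> vec.span (vec.span A \<union> vec.span B)"
    by (intro vec.span_mono) (auto intro: vec.span_base)
qed

lemma dim_span1: "vec.dim (vec.span {x}) \<le> 1"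
  unfolding vec.dim_span using vec.dim_le_card[of "{x}" "{x}"] by (simp add: vec.span_superset)

context
  fixes E :: "('a::{field,finite} ^ 'n) set" and \<rho> :: "('a ^ 'n) set \<Rightarrow> nat"
  assumes qm: "qmatroid E \<rho>"
begin

lemma qsubE: "vec.subspace E" using qm unfolding qmatroid_def by blast
lemma qdim: "V \<in> subspaces_of E \<Longrightarrow> \<rho> V \<le> vec.dim V" using qm unfolding qmatroid_def by blast
lemma qmono: "V \<in> subspaces_of E \<Longrightarrow> W \<in> subspaces_of E \<Longrightarrow> V \<subseteq> W \<Longrightarrow> \<rho> V \<le> \<rho> W"
  using qm unfolding qmatroid_def by blast
lemma qsubm: "V \<in> subspaces_of E \<Longrightarrow> W \<in> subspaces_of E \<Longrightarrow> \<rho> (ssum V W) + \<rho> (V \<inter> W) \<le> \<rho> V + \<rho> W"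
  using qm unfolding qmatroid_def by blast

lemma qzero: "\<rho> {0} = 0"
proof -
  have "vec.dim {0::'a^'n} = 0" using vec.dim_span[of "{}::('a^'n) set"] by simp
  then show ?thesis using qdim[OF subsp_zero[OF qsubE]] by simp
qed

lemma qinc1: "V \<in> subspaces_of E \<Longrightarrow> x \<in> E \<Longrightarrow> \<rho> (ssum V (vec.span {x})) \<le> \<rho> V + 1"
proof -
  assume V: "V \<in> subspaces_of E" and xE: "x \<in> E"
  have X: "vec.span {x} \<in> subspaces_of E" by (rule subsp_span1[OF xE qsubE])
  have "\<rho> (ssum V (vec.span {x})) + \<rho> (V \<inter> vec.span {x}) \<le> \<rho> V + \<rho> (vec.span {x})"
    by (rule qsubm[OF V X])
  moreover have "\<rho> (vec.span {x}) \<le> 1" using qdim[OF X] dim_span1[of x] by (rule order_trans)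
  ultimately show ?thesis by linarith
qed

lemma qupper: "V \<in> subspaces_of E \<Longrightarrow> U \<in> subspaces_of E \<Longrightarrow> V \<subseteq> U \<Longrightarrow> \<rho> U \<le> \<rho> V + (vec.dim U - vec.dim V)"
proof (induction "vec.dim U - vec.dim V" arbitrary: V rule: less_induct)
  case less
  show ?case
  proof (cases "U = V")
    case True then show ?thesis by simp
  next
    case False
    then obtain x where x: "x \<in> U" "x \<notin> V" using less.prems(3) by blast
    have sV: "vec.subspace V" "vec.subspace U" "U \<subseteq> E" using less.prems unfolding subspaces_of_def by auto
    define V' where "V' = ssum V (vec.span {x})"
    have V'eq: "V' = vec.span (insert x V)" using sub_ssum[OF sV(1)] V'_def by simp
    have xE: "x \<in> E" using x sV by auto
    have V'sub: "V' \<in> subspaces_of E" unfolding V'_def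
      by (rule subsp_ssum[OF less.prems(1) subsp_span1[OF xE qsubE] qsubE])
    have V'U: "V' \<subseteq> U" unfolding V'eq using x less.prems(3) sV
      by (intro vec.span_minimal) auto
    have spV: "vec.span V = V" using sV(1) by simp
    have dV': "vec.dim V' = vec.dim V + 1"
    proof -
      have "x \<notin> vec.span V" using x(2) unfolding spV .
      then show ?thesis unfolding V'eq vec.dim_span vec.dim_insert by simp
    qed
    have dVU: "vec.dim V' \<le> vec.dim U" using vec.dim_subset[OF V'U] .
    have lt: "vec.dim U - vec.dim V' < vec.dim U - vec.dim V" using dV' dVU by linarith
    have IH: "\<rho> U \<le> \<rho> V' + (vec.dim U - vec.dim V')"
      by (rule less.hyps[OF lt V'sub less.prems(2) V'U])
    moreover have "\<rho> V' \<le> \<rho> V + 1" unfolding V'_def by (rule qinc1[OF less.prems(1) xE])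
    ultimately show ?thesis using dV' dVU by linarith
  qed
qed

end

context
  fixes E :: "('a::{field,finite} ^ 'n) set" and \<rho> :: "('a ^ 'n) set \<Rightarrow> nat" and Z
  assumes qm: "qmatroid E \<rho>" and cf: "cyclic_flats E \<rho> = {Z}"
begin

definition "LS = {x \<in> E. \<rho> (vec.span {x}) = 0}"

lemma qcl0: "qcl E \<rho> {0} = vec.span LS"
proof -
  have e: "ssum {0} (vec.span {x}) = vec.span {x}" for x :: "'a^'n"
    using sub_ssum[OF vec.subspace_single_0, of x] by (simp add: insert_commute)
  have "qcl E \<rho> {0} = vec.span (\<Union>{vec.span {x} | x. x \<in> LS})"
    unfolding qcl_def e qzero[OF qm] LS_def by simp
  also have "\<dots> = vec.span LS"
  proof
    show "vec.span (\<Union>{vec.span {x} | x. x \<in> LS}) \<subseteq> vec.span LS"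
      by (intro vec.span_minimal) (auto intro: vec.span_mono[THEN subsetD])
    show "vec.span LS \<subseteq> vec.span (\<Union>{vec.span {x} | x. x \<in> LS})"
      by (intro vec.span_mono) (auto intro: vec.span_base)
  qed
  finally show ?thesis .
qed

lemma LS_iff: "x \<in> LS \<longleftrightarrow> x \<in> E \<and> \<rho> (vec.span {x}) = 0" unfolding LS_def by simp

lemma LS_E: "LS \<subseteq> E" unfolding LS_def by auto

lemma L_sub: "vec.span LS \<in> subspaces_of E"
  unfolding subspaces_of_def using vec.span_minimal[OF LS_E qsubE[OF qm]] by auto

lemma rho_LS: "T \<subseteq> LS \<Longrightarrow> \<rho> (vec.span T) = 0"
proof -
  assume T: "T \<subseteq> LS"
  have "finite T" by (rule finite_subset[of _ UNIV]) auto
  then show ?thesis using T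
  proof (induction T rule: finite_induct)
    case empty
    then show ?case using qzero[OF qm] by simp
  next
    case (insert x T)
    have xE: "x \<in> E" and x0: "\<rho> (vec.span {x}) = 0" using insert.prems LS_def by auto
    have TE: "vec.span T \<in> subspaces_of E"
      unfolding subspaces_of_def using vec.span_minimal[of T E] insert.prems LS_E qsubE[OF qm] by auto
    have "ssum (vec.span T) (vec.span {x}) = vec.span (insert x T)"
      using ssum_span[of T "{x}"] by simp
    moreover have "\<rho> (ssum (vec.span T) (vec.span {x})) + \<rho> (vec.span T \<inter> vec.span {x}) \<le> \<rho> (vec.span T) + \<rho> (vec.span {x})"
      by (rule qsubm[OF qm TE subsp_span1[OF xE qsubE[OF qm]]])
    ultimately show ?case using insert.IH insert.prems x0 by simp
  qed
qed

lemma rho_L: "\<rho> (vec.span LS) = 0" using rho_LS by simp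

lemma L_cf: "vec.span LS \<in> cyclic_flats E \<rho>"
proof -
  have flat: "is_flat E \<rho> (vec.span LS)"
    unfolding is_flat_def
  proof (intro conjI ballI impI L_sub)
    fix x assume xE: "x \<in> E" and xL: "x \<notin> vec.span LS"
    have "x \<notin> LS" using xL vec.span_base by blast
    then have "\<rho> (vec.span {x}) \<noteq> 0" using xE LS_def by auto
    moreover have "\<rho> (vec.span {x}) \<le> \<rho> (ssum (vec.span LS) (vec.span {x}))"
      by (rule qmono[OF qm subsp_span1[OF xE qsubE[OF qm]] subsp_ssum[OF L_sub subsp_span1[OF xE qsubE[OF qm]] qsubE[OF qm]]])
        (auto simp: ssum_def intro: vec.span_base)
    ultimately show "\<rho> (vec.span LS) < \<rho> (ssum (vec.span LS) (vec.span {x}))"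
      using rho_L by simp
  qed
  have cyc: "is_cyclic E \<rho> (vec.span LS)"
    unfolding is_cyclic_def qcyc_def
  proof (intro conjI L_sub)
    show "{x \<in> vec.span LS. \<forall>W. vec.subspace W \<and> W \<subseteq> vec.span LS \<and> ssum W (vec.span {x}) = vec.span LS \<longrightarrow>
          \<rho> W = \<rho> (vec.span LS)} = vec.span LS"
    proof (safe)
      fix x W assume "vec.subspace W" "W \<subseteq> vec.span LS"
      then have "W \<in> subspaces_of E" using L_sub unfolding subspaces_of_def by auto
      then show "\<rho> W = \<rho> (vec.span LS)"
        using qmono[OF qm _ L_sub \<open>W \<subseteq> vec.span LS\<close>] rho_L by simp
    qed
  qed
  show ?thesis using flat cyc unfolding cyclic_flats_def by simp
qed

lemma Z_eq: "Z = vec.span LS" using L_cf cf by simp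

lemma Z_sub: "Z \<in> subspaces_of E" using Z_eq L_sub by simp
lemma rho_Z: "\<rho> Z = 0" using Z_eq rho_L by simp
lemma Z_subspace: "vec.subspace Z" using Z_sub unfolding subspaces_of_def by simp

lemma flat_Z: "is_flat E \<rho> F \<Longrightarrow> Z \<subseteq> F"
proof -
  assume fl: "is_flat E \<rho> F"
  then have FE: "F \<in> subspaces_of E" and sF: "vec.subspace F" unfolding is_flat_def subspaces_of_def by auto
  have "LS \<subseteq> F"
  proof
    fix s assume sLS: "s \<in> LS"
    show "s \<in> F"
    proof (rule ccontr)
      assume "s \<notin> F"
      have sE: "s \<in> E" and s0: "\<rho> (vec.span {s}) = 0" using sLS LS_def by auto
      have "\<rho> F < \<rho> (ssum F (vec.span {s}))" using fl sE \<open>s \<notin> F\<close> unfolding is_flat_def by blast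
      moreover have "\<rho> (ssum F (vec.span {s})) + \<rho> (F \<inter> vec.span {s}) \<le> \<rho> F + \<rho> (vec.span {s})"
        by (rule qsubm[OF qm FE subsp_span1[OF sE qsubE[OF qm]]])
      ultimately show False using s0 by simp
    qed
  qed
  then show ?thesis using Z_eq vec.span_minimal[OF _ sF] by simp
qed


lemma key: "U \<in> subspaces_of E \<Longrightarrow> Z \<subseteq> U \<Longrightarrow> vec.dim U \<le> \<rho> U + vec.dim Z"
proof (rule ccontr)
  assume U: "U \<in> subspaces_of E" "Z \<subseteq> U" and nU: "\<not> vec.dim U \<le> \<rho> U + vec.dim Z"
  have sE: "vec.subspace E" by (rule qsubE[OF qm])
  define C where "C = {U \<in> subspaces_of E. Z \<subseteq> U \<and> \<rho> U + vec.dim Z < vec.dim U}"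
  have finC: "finite C" by (rule finite_subset[of _ UNIV]) auto
  have "U \<in> C" using U nU C_def by auto
  then obtain M where M: "M \<in> C" and Mmax: "\<forall>b\<in>C. M \<subseteq> b \<longrightarrow> M = b"
    using finite_has_maximal[OF finC] by blast
  have MS: "M \<in> subspaces_of E" and ZM: "Z \<subseteq> M" and Mlt: "\<rho> M + vec.dim Z < vec.dim M"
    using M C_def by auto
  have sM: "vec.subspace M" using MS subspaces_of_def by auto
  have Mflat: "is_flat E \<rho> M"
    unfolding is_flat_def
  proof (intro conjI ballI impI MS)
    fix x assume xE: "x \<in> E" and xM: "x \<notin> M"
    define M' where "M' = ssum M (vec.span {x})"
    have M'eq: "M' = vec.span (insert x M)" using sub_ssum[OF sM] M'_def by simp
    have M'S: "M' \<in> subspaces_of E" unfolding M'_def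
      by (rule subsp_ssum[OF MS subsp_span1[OF xE sE] sE])
    have MM': "M \<subseteq> M'" unfolding M'eq using vec.span_superset[of "insert x M"] by blast
    have xM': "x \<in> M'" unfolding M'eq by (rule vec.span_base) simp
    have spM: "vec.span M = M" using sM by simp
    have "x \<notin> vec.span M" using xM unfolding spM .
    then have dM': "vec.dim M' = vec.dim M + 1" unfolding M'eq vec.dim_span vec.dim_insert by simp
    have ge: "\<rho> M \<le> \<rho> M'" by (rule qmono[OF qm MS M'S MM'])
    show "\<rho> M < \<rho> M'"
    proof (rule ccontr)
      assume "\<not> \<rho> M < \<rho> M'"
      then have "\<rho> M' = \<rho> M" using ge by simp
      then have "M' \<in> C" using M'S ZM MM' Mlt dM' C_def by auto
      then have "M = M'" using Mmax MM' by blast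
      then show False using xM xM' by simp
    qed
  qed
  define CF where "CF = {F \<in> C. is_flat E \<rho> F}"
  have finCF: "finite CF" using finC CF_def by simp
  have "M \<in> CF" using M Mflat CF_def by simp
  then obtain F where F: "F \<in> CF" and Fmin: "\<forall>b\<in>CF. b \<subseteq> F \<longrightarrow> b = F"
    using finite_has_minimal[OF finCF] by blast
  have FS: "F \<in> subspaces_of E" and ZF: "Z \<subseteq> F" and Flt: "\<rho> F + vec.dim Z < vec.dim F"
    and Fflat: "is_flat E \<rho> F"
    using F C_def CF_def by auto
  have sF: "vec.subspace F" using FS subspaces_of_def by auto
  have FE: "F \<subseteq> E" using FS subspaces_of_def by auto
  have Fcyc: "qcyc E \<rho> F = F"
  proof
    show "qcyc E \<rho> F \<subseteq> F" unfolding qcyc_def by auto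
    show "F \<subseteq> qcyc E \<rho> F"
    proof
      fix x assume xF: "x \<in> F"
      have "\<rho> W = \<rho> F" if sW: "vec.subspace W" and WF: "W \<subseteq> F"
        and WxF: "ssum W (vec.span {x}) = F" for W
      proof -
      have WS: "W \<in> subspaces_of E" using sW WF FE unfolding subspaces_of_def by auto
      have WxF': "vec.span (insert x W) = F" using WxF sub_ssum[OF sW] by simp
      show "\<rho> W = \<rho> F"
      proof (rule ccontr)
        assume ne: "\<rho> W \<noteq> \<rho> F"
        have rlt: "\<rho> W < \<rho> F" using qmono[OF qm WS FS WF] ne by simp
        have spW: "vec.span W = W" using sW by simp
        have xW: "x \<notin> W"
        proof
          assume "x \<in> W"
          then have "insert x W = W" by auto
          then have "F = W" using WxF' spW by simp
          then show False using ne by simp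
        qed
        have "x \<notin> vec.span W" using xW unfolding spW .
        then have dF: "vec.dim F = vec.dim W + 1"
          using WxF' vec.dim_insert[of x W] vec.dim_span[of "insert x W"] by simp
        have Wflat: "is_flat E \<rho> W"
          unfolding is_flat_def
        proof (intro conjI ballI impI WS)
          fix z assume zE: "z \<in> E" and zW: "z \<notin> W"
          have e1: "ssum W (vec.span {z}) = vec.span (insert z W)" by (rule sub_ssum[OF sW])
          show "\<rho> W < \<rho> (ssum W (vec.span {z}))"
          proof (cases "z \<in> F")
            case True
            have sub: "vec.span (insert z W) \<subseteq> F" using True WF sF by (intro vec.span_minimal) auto
            have "z \<notin> vec.span W" using zW unfolding spW .
            then have "vec.dim (vec.span (insert z W)) = vec.dim W + 1"
              using vec.dim_insert[of z W] vec.dim_span[of "insert z W"] by simp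
            then have "vec.span (insert z W) = F"
              using vec.subspace_dim_equal[OF vec.subspace_span sF sub] dF by simp
            then show ?thesis using e1 rlt by simp
          next
            case False
            show ?thesis
            proof (rule ccontr)
              assume "\<not> \<rho> W < \<rho> (ssum W (vec.span {z}))"
              then have le: "\<rho> (vec.span (insert z W)) \<le> \<rho> W" using e1 by simp
              define B where "B = vec.span (insert z W)"
              have BS: "B \<in> subspaces_of E" unfolding B_def e1[symmetric]
                by (rule subsp_ssum[OF WS subsp_span1[OF zE sE] sE])
              have sub1: "ssum F B = vec.span (insert z F)"
              proof -
                have spF: "vec.span F = F" using sF by simp
                have "F \<union> insert z W = insert z F" using WF by auto
                then show ?thesis unfolding B_def using ssum_span[of F "insert z W"] unfolding spF by simp
              qed
              have sub2: "ssum F (vec.span {z}) = vec.span (insert z F)" by (rule sub_ssum[OF sF])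
              have "\<rho> (ssum F B) + \<rho> (F \<inter> B) \<le> \<rho> F + \<rho> B" by (rule qsubm[OF qm FS BS])
              moreover have "\<rho> W \<le> \<rho> (F \<inter> B)"
                by (rule qmono[OF qm WS subsp_int[OF FS BS]])
                  (use WF in \<open>auto simp: B_def intro: vec.span_base\<close>)
              moreover have "\<rho> F < \<rho> (ssum F (vec.span {z}))"
                using Fflat zE False unfolding is_flat_def by blast
              ultimately show False using le sub1 sub2 B_def by simp
            qed
          qed
        qed
        have "Z \<subseteq> W" by (rule flat_Z[OF Wflat])
        then have "W \<in> CF" using WS Wflat rlt Flt dF C_def CF_def by auto
        then have "W = F" using Fmin WF by blast
        then show False using ne by simp
      qed
      qed
      then show "x \<in> qcyc E \<rho> F" unfolding qcyc_def using xF by blast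
    qed
  qed
  have "F \<in> cyclic_flats E \<rho>" unfolding cyclic_flats_def is_cyclic_def using Fflat FS Fcyc by simp
  then have "F = Z" using cf by simp
  then show False using Flt by simp
qed


lemma rankf: "V \<in> subspaces_of E \<Longrightarrow> \<rho> V + vec.dim Z = vec.dim (ssum V Z)"
proof -
  assume VS: "V \<in> subspaces_of E"
  have sE: "vec.subspace E" by (rule qsubE[OF qm])
  have US: "ssum V Z \<in> subspaces_of E" by (rule subsp_ssum[OF VS Z_sub sE])
  have VU: "V \<subseteq> ssum V Z" unfolding ssum_def using vec.span_superset[of "V \<union> Z"] by blast
  have ZU: "Z \<subseteq> ssum V Z" unfolding ssum_def using vec.span_superset[of "V \<union> Z"] by blast
  have "\<rho> (ssum V Z) + \<rho> (V \<inter> Z) \<le> \<rho> V + \<rho> Z" by (rule qsubm[OF qm VS Z_sub])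
  moreover have "\<rho> V \<le> \<rho> (ssum V Z)" by (rule qmono[OF qm VS US VU])
  ultimately have eq: "\<rho> (ssum V Z) = \<rho> V" using rho_Z by simp
  have "vec.dim (ssum V Z) \<le> \<rho> (ssum V Z) + vec.dim Z" by (rule key[OF US ZU])
  moreover have "\<rho> (ssum V Z) \<le> \<rho> Z + (vec.dim (ssum V Z) - vec.dim Z)" by (rule qupper[OF qm Z_sub US ZU])
  moreover have "vec.dim Z \<le> vec.dim (ssum V Z)" by (rule vec.dim_subset[OF ZU])
  ultimately show ?thesis using eq rho_Z by linarith
qed

lemma rank_sup: "V \<in> subspaces_of E \<Longrightarrow> Z \<subseteq> V \<Longrightarrow> \<rho> V + vec.dim Z = vec.dim V"
proof -
  assume VS: "V \<in> subspaces_of E" and ZV: "Z \<subseteq> V"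
  have sV: "vec.subspace V" using VS unfolding subspaces_of_def by auto
  have "V \<union> Z = V" using ZV by auto
  then have "ssum V Z = V" unfolding ssum_def using sV by simp
  then show ?thesis using rankf[OF VS] by simp
qed

lemma qcyc_eq: "V \<in> subspaces_of E \<Longrightarrow> qcyc E \<rho> V = V \<inter> Z"
proof -
  assume VS: "V \<in> subspaces_of E"
  have sV: "vec.subspace V" and VE: "V \<subseteq> E" using VS unfolding subspaces_of_def by auto
  have sZ: "vec.subspace Z" by (rule Z_subspace)
  have spZ: "vec.span Z = Z" using sZ by simp
  have spV: "vec.span V = V" using sV by simp
  show ?thesis
  proof
    show "V \<inter> Z \<subseteq> qcyc E \<rho> V"
    proof
      fix x assume x: "x \<in> V \<inter> Z"
      have "\<rho> W = \<rho> V" if sW: "vec.subspace W" and WV: "W \<subseteq> V"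
        and WxV: "ssum W (vec.span {x}) = V" for W
      proof -
        have WS: "W \<in> subspaces_of E" using sW WV VE unfolding subspaces_of_def by auto
        have "ssum W Z = ssum V Z"
        proof
          show "ssum W Z \<subseteq> ssum V Z" unfolding ssum_def using WV by (intro vec.span_mono) auto
          have "V \<subseteq> vec.span (W \<union> Z)"
          proof -
            have "vec.span {x} \<subseteq> vec.span (W \<union> Z)" using x by (intro vec.span_mono) auto
            then have "W \<union> vec.span {x} \<subseteq> vec.span (W \<union> Z)"
              using vec.span_superset[of "W \<union> Z"] by blast
            then have "vec.span (W \<union> vec.span {x}) \<subseteq> vec.span (W \<union> Z)"
              by (intro vec.span_minimal) auto
            then show ?thesis using WxV unfolding ssum_def by simp
          qed
          then have "V \<union> Z \<subseteq> vec.span (W \<union> Z)" using vec.span_superset[of "W \<union> Z"] by blast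
          then show "ssum V Z \<subseteq> ssum W Z" unfolding ssum_def by (intro vec.span_minimal) auto
        qed
        then show ?thesis using rankf[OF WS] rankf[OF VS] by simp
      qed
      then show "x \<in> qcyc E \<rho> V" unfolding qcyc_def using x by blast
    qed
    show "qcyc E \<rho> V \<subseteq> V \<inter> Z"
    proof
      fix x assume xq: "x \<in> qcyc E \<rho> V"
      then have xV: "x \<in> V" and all: "\<And>W. vec.subspace W \<Longrightarrow> W \<subseteq> V \<Longrightarrow> ssum W (vec.span {x}) = V \<Longrightarrow> \<rho> W = \<rho> V"
        unfolding qcyc_def by auto
      show "x \<in> V \<inter> Z"
      proof (rule ccontr)
        assume "x \<notin> V \<inter> Z"
        then have xZ: "x \<notin> Z" using xV by simp
        define WW where "WW = {W. vec.subspace W \<and> V \<inter> Z \<subseteq> W \<and> W \<subseteq> V \<and> x \<notin> ssum W Z}"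
        have finWW: "finite WW" by (rule finite_subset[of _ UNIV]) auto
        have "ssum (V \<inter> Z) Z = Z"
        proof -
          have "(V \<inter> Z) \<union> Z = Z" by auto
          then show ?thesis unfolding ssum_def using sZ by simp
        qed
        then have "V \<inter> Z \<in> WW" unfolding WW_def using xZ sV sZ by (auto intro: vec.subspace_inter)
        then obtain W where W: "W \<in> WW" and Wmax: "\<forall>b\<in>WW. W \<subseteq> b \<longrightarrow> W = b"
          using finite_has_maximal[OF finWW] by blast
        have sW: "vec.subspace W" and VZW: "V \<inter> Z \<subseteq> W" and WV: "W \<subseteq> V" and xWZ: "x \<notin> ssum W Z"
          using W WW_def by auto
        have spW: "vec.span W = W" using sW by simp
        have WS: "W \<in> subspaces_of E" using sW WV VE unfolding subspaces_of_def by auto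
        have WxV: "ssum W (vec.span {x}) = V"
        proof -
          have e: "ssum W (vec.span {x}) = vec.span (insert x W)" by (rule sub_ssum[OF sW])
          have "vec.span (insert x W) = V"
          proof
            show "vec.span (insert x W) \<subseteq> V" using xV WV sV by (intro vec.span_minimal) auto
            show "V \<subseteq> vec.span (insert x W)"
            proof
              fix y assume yV: "y \<in> V"
              show "y \<in> vec.span (insert x W)"
              proof (rule ccontr)
                assume yn: "y \<notin> vec.span (insert x W)"
                define W' where "W' = vec.span (insert y W)"
                have yW: "y \<notin> W" using yn vec.span_superset[of "insert x W"] by blast
                have WW': "W \<subseteq> W'" unfolding W'_def using vec.span_superset[of "insert y W"] by blast
                have yW': "y \<in> W'" unfolding W'_def by (rule vec.span_base) simp
                have W'V: "W' \<subseteq> V" unfolding W'_def using yV WV sV by (intro vec.span_minimal) auto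
                have "W' \<notin> WW"
                proof
                  assume "W' \<in> WW"
                  then have "W = W'" using Wmax WW' by blast
                  then show False using yW yW' by simp
                qed
                then have "x \<in> ssum W' Z" unfolding WW_def W'_def using VZW WW' W'_def W'V by auto
                moreover have "ssum W' Z = vec.span (insert y (W \<union> Z))"
                  unfolding W'_def using ssum_span[of "insert y W" Z] unfolding spZ by simp
                ultimately obtain k where k: "x - k *s y \<in> vec.span (W \<union> Z)"
                  using vec.span_breakdown_eq by blast
                then obtain w z where wz: "x - k *s y = w + z" "w \<in> W" "z \<in> Z"
                  unfolding vec.span_Un spW spZ by blast
                have k0: "k \<noteq> 0"
                proof
                  assume "k = 0"
                  then have "x \<in> vec.span (W \<union> Z)" using k by simp
                  then show False using xWZ unfolding ssum_def by simp
                qed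
                have "z = x - k *s y - w" using wz by (simp add: algebra_simps)
                moreover have "x - k *s y - w \<in> V"
                  using xV yV wz(2) WV sV by (intro vec.subspace_diff vec.subspace_scale) auto
                ultimately have "z \<in> V \<inter> Z" using wz by simp
                then have zW: "z \<in> W" using VZW by blast
                have "k *s y = x - (w + z)" using wz by (simp add: algebra_simps)
                moreover have "x - (w + z) \<in> vec.span (insert x W)"
                  using wz(2) zW by (intro vec.span_diff vec.span_add vec.span_base) auto
                ultimately have "k *s y \<in> vec.span (insert x W)" by simp
                then have "(inverse k) *s (k *s y) \<in> vec.span (insert x W)" by (rule vec.span_scale)
                then have "y \<in> vec.span (insert x W)" using k0 by simp
                then show False using yn by simp
              qed
            qed
          qed
          then show ?thesis using e by simp
        qed
        have "\<rho> W = \<rho> V" by (rule all[OF sW WV WxV])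
        moreover have "vec.dim (ssum W Z) < vec.dim (ssum V Z)"
        proof -
          have "vec.span (W \<union> Z) \<subset> vec.span (V \<union> Z)"
          proof
            show "vec.span (W \<union> Z) \<subseteq> vec.span (V \<union> Z)" using WV by (intro vec.span_mono) auto
            have "x \<in> vec.span (V \<union> Z)" using xV vec.span_superset[of "V \<union> Z"] by blast
            then show "vec.span (W \<union> Z) \<noteq> vec.span (V \<union> Z)" using xWZ unfolding ssum_def by auto
          qed
          then show ?thesis unfolding ssum_def vec.dim_span by (rule vec.dim_psubset)
        qed
        ultimately show False using rankf[OF WS] rankf[OF VS] by simp
      qed
    qed
  qed
qed

end

theorem proposition4p8:
  fixes E :: "('a::{field,finite} ^ 'n) set" and \<rho> :: "('a ^ 'n) set \<Rightarrow> nat"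
    and Z :: "('a ^ 'n) set"
  assumes "qmatroid E \<rho>"
    and "cyclic_flats E \<rho> = {Z}"
  shows "(\<forall>V \<in> subspaces_of E. is_flat E \<rho> V \<longleftrightarrow> Z \<subseteq> V)
       \<and> (\<forall>V \<in> subspaces_of E. is_cyclic E \<rho> V \<longleftrightarrow> V \<subseteq> Z)
       \<and> (qcl E \<rho> {0} = E \<longleftrightarrow> is_uniform 0 E \<rho>)
       \<and> (qcyc E \<rho> E = {0} \<longleftrightarrow> is_uniform (vec.dim E) E \<rho>)"
proof -
  note qm = assms(1) and cf = assms(2)
  have sE: "vec.subspace E" by (rule qsubE[OF qm])
  have ES: "E \<in> subspaces_of E" using sE unfolding subspaces_of_def by auto
  have ZS: "Z \<in> subspaces_of E" by (rule Z_sub[OF qm cf])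
  have ZE: "Z \<subseteq> E" using ZS unfolding subspaces_of_def by auto
  have P1: "\<forall>V \<in> subspaces_of E. is_flat E \<rho> V \<longleftrightarrow> Z \<subseteq> V"
  proof (intro ballI iffI)
    fix V assume "is_flat E \<rho> V" then show "Z \<subseteq> V" by (rule flat_Z[OF qm cf])
  next
    fix V assume VS: "V \<in> subspaces_of E" and ZV: "Z \<subseteq> V"
    have sV: "vec.subspace V" using VS unfolding subspaces_of_def by auto
    show "is_flat E \<rho> V" unfolding is_flat_def
    proof (intro conjI ballI impI VS)
      fix x assume xE: "x \<in> E" and xV: "x \<notin> V"
      define V' where "V' = ssum V (vec.span {x})"
      have V'eq: "V' = vec.span (insert x V)" using sub_ssum[OF sV] V'_def by simp
      have V'S: "V' \<in> subspaces_of E" unfolding V'_def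
        by (rule subsp_ssum[OF VS subsp_span1[OF xE sE] sE])
      have VV': "V \<subseteq> V'" unfolding V'eq using vec.span_superset[of "insert x V"] by blast
      have spV: "vec.span V = V" using sV by simp
      have "x \<notin> vec.span V" using xV unfolding spV .
      then have dV': "vec.dim V' = vec.dim V + 1" unfolding V'eq vec.dim_span vec.dim_insert by simp
      have "\<rho> V + vec.dim Z = vec.dim V" by (rule rank_sup[OF qm cf VS ZV])
      moreover have "\<rho> V' + vec.dim Z = vec.dim V'" by (rule rank_sup[OF qm cf V'S]) (use ZV VV' in auto)
      ultimately show "\<rho> V < \<rho> (ssum V (vec.span {x}))" using dV' V'_def by simp
    qed
  qed
  have P2: "\<forall>V \<in> subspaces_of E. is_cyclic E \<rho> V \<longleftrightarrow> V \<subseteq> Z"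
  proof (intro ballI)
    fix V assume VS: "V \<in> subspaces_of E"
    show "is_cyclic E \<rho> V \<longleftrightarrow> V \<subseteq> Z"
      unfolding is_cyclic_def qcyc_eq[OF qm cf VS] using VS by auto
  qed
  have cl0: "qcl E \<rho> {0} = Z" using qcl0[OF qm cf] Z_eq[OF qm cf] by simp
  have P3: "qcl E \<rho> {0} = E \<longleftrightarrow> is_uniform 0 E \<rho>"
    unfolding cl0
  proof
    assume "Z = E"
    then have "\<rho> E = 0" using rho_Z[OF qm cf] by simp
    show "is_uniform 0 E \<rho>" unfolding is_uniform_def
    proof
      fix V assume VS: "V \<in> subspaces_of E"
      have "V \<subseteq> E" using VS unfolding subspaces_of_def by auto
      then have "\<rho> V \<le> \<rho> E" by (rule qmono[OF qm VS ES])
      then show "\<rho> V = min 0 (vec.dim V)" using \<open>\<rho> E = 0\<close> by simp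
    qed
  next
    assume u: "is_uniform 0 E \<rho>"
    have "E \<subseteq> Z"
    proof
      fix x assume xE: "x \<in> E"
      have "\<rho> (vec.span {x}) = 0" using u subsp_span1[OF xE sE] unfolding is_uniform_def by simp
      then have "x \<in> LS E \<rho>" using xE LS_iff[OF qm cf] by simp
      then show "x \<in> Z" using Z_eq[OF qm cf] vec.span_superset[of "LS E \<rho>"] by blast
    qed
    then show "Z = E" using ZE by blast
  qed
  have cycE: "qcyc E \<rho> E = Z" using qcyc_eq[OF qm cf ES] ZE by auto
  have P4: "qcyc E \<rho> E = {0} \<longleftrightarrow> is_uniform (vec.dim E) E \<rho>"
    unfolding cycE
  proof
    assume Z0: "Z = {0}"
    show "is_uniform (vec.dim E) E \<rho>" unfolding is_uniform_def
    proof
      fix V assume VS: "V \<in> subspaces_of E"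
      have sV: "vec.subspace V" and VE: "V \<subseteq> E" using VS unfolding subspaces_of_def by auto
      have "V \<union> Z = V" using Z0 vec.subspace_0[OF sV] by auto
      then have "ssum V Z = V" unfolding ssum_def using sV by simp
      then have r: "\<rho> V + vec.dim Z = vec.dim V" using rankf[OF qm cf VS] by simp
      have d0: "vec.dim Z = 0" using Z0 vec.dim_span[of "{}::('a^'n) set"] by simp
      have "\<rho> V = vec.dim V" using r d0 by linarith
      moreover have "vec.dim V \<le> vec.dim E" by (rule vec.dim_subset[OF VE])
      ultimately show "\<rho> V = min (vec.dim E) (vec.dim V)" by simp
    qed
  next
    assume u: "is_uniform (vec.dim E) E \<rho>"
    have "LS E \<rho> \<subseteq> {0}"
    proof
      fix x assume x: "x \<in> LS E \<rho>"
      then have xE: "x \<in> E" and r0: "\<rho> (vec.span {x}) = 0" using LS_iff[OF qm cf] by auto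
      show "x \<in> {0}"
      proof (rule ccontr)
        assume "x \<notin> {0}"
        then have "x \<notin> vec.span {}" by simp
        then have d1: "vec.dim (vec.span {x}) = 1"
          unfolding vec.dim_span using vec.dim_insert[of x "{}"] by simp
        have xsE: "vec.span {x} \<subseteq> E" using subsp_span1[OF xE sE] unfolding subspaces_of_def by auto
        have "1 \<le> vec.dim E" using vec.dim_subset[OF xsE] d1 by simp
        moreover have "\<rho> (vec.span {x}) = min (vec.dim E) (vec.dim (vec.span {x}))"
          using u subsp_span1[OF xE sE] unfolding is_uniform_def by simp
        ultimately show False using r0 d1 by simp
      qed
    qed
    then have "Z \<subseteq> {0}" using Z_eq[OF qm cf] vec.span_mono[of "LS E \<rho>" "{0}"] by simp
    moreover have "0 \<in> Z" using vec.subspace_0[OF Z_subspace[OF qm cf]] .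
    ultimately show "Z = {0}" by blast
  qed
  show ?thesis by (intro conjI P1 P2 P3 P4)
qed

end
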